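(* Let $\mathbf A$ be a nontrivial finite subdirectly irreducible cBCK-algebra. For every $\mathbf C\in\mathrm{Cov}(A)$, the variety $\mathcal V(\mathbf A)\vee\mathcal V(\mathbf C)$ is a cover of $\mathcal V(\mathbf A)$ in the lattice of varieties of cBCK-algebras.
   Context: A BCK-algebra is an algebra $(A,\ominus,0)$ of type $(2,0)$ satisfying $((x\ominus y)\ominus(x\ominus z))\ominus(z\ominus y)=0$, $x\ominus 0=x$, $0\ominus x=0$, and ($x\ominus y=0$ and $y\ominus x=0$ imply $x=y$); it is ordered by $x\le y$ iff $x\ominus y=0$. A cBCK-algebra is a BCK-algebra satisfying $x\ominus(x\ominus y)=y\ominus(y\ominus x)$; cBCK-algebras form a variety, and the order is a meet-semilattice with $x\wedge y=x\ominus(x\ominus y)$. Finite nontrivial subdirectly irreducible cBCK-algebras are exactly (up to isomorphism) the finite rooted trees (root $0$) with a single atom, where the tree determines the operation: $x\ominus y$ is the element of $[0,x]$ of height $\mathrm{h}(x)-\mathrm{h}(x\wedge y)$, with $\mathrm{h}(z)=|[0,z]|-1$. $\mathcal V(\mathbf X)$ is the variety generated by $\mathbf X$; a cover of a variety $\mathcal V$ is a variety $\mathcal K\supsetneq\mathcal V$ with no variety strictly between them. Construction of $\mathrm{Cov}(A)$: for a subalgebra $\mathbf B$ of $\mathbf A$ and $a\in B$, $a\ne 0$, let $\mathbf B_a$ be the cBCK-algebra with universe $B\cup\{c\}$, $c\notin B$ a new maximal element covering $a$ (so $\mathbf B$ is a subalgebra of $\mathbf B_a$). Let $\mathcal S(\mathbf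 B_a)(c)$ be the set of subalgebras of $\mathbf B_a$ containing $c$. Whenever some member of $\mathcal S(\mathbf B_a)(c)$ is not isomorphic to a subalgebra of $\mathbf A$, let $\mathbf C_a$ be the smallest (under inclusion) member of $\mathcal S(\mathbf B_a)(c)$ not isomorphic to a subalgebra of $\mathbf A$ (it exists). $C_B$ is the collection of all such $\mathbf C_a$, $a\in B$, and $\mathrm{Cov}(A)=\bigcup_{\mathbf B}C_B$ over all subalgebras $\mathbf B$ of $\mathbf A$. *)

theory Defs
  imports Main
begin

record 'a alg =
  car :: "'a set"
  opr :: "'a \<Rightarrow> 'a \<Rightarrow> 'a"
  zer :: "'a"

definition is_cBCK :: "'a alg \<Rightarrow> bool" where
  "is_cBCK X \<longleftrightarrow>
     zer X \<in> car X \<and>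
     (\<forall>x\<in>car X. \<forall>y\<in>car X. opr X x y \<in> car X) \<and>
     (\<forall>x\<in>car X. \<forall>y\<in>car X. \<forall>z\<in>car X.
        opr X (opr X (opr X x y) (opr X x z)) (opr X z y) = zer X) \<and>
     (\<forall>x\<in>car X. opr X x (zer X) = x) \<and>
     (\<forall>x\<in>car X. opr X (zer X) x = zer X) \<and>
     (\<forall>x\<in>car X. \<forall>y\<in>car X. opr X x y = zer X \<and> opr X y x = zer X \<longrightarrow> x = y) \<and>
     (\<forall>x\<in>car X. \<forall>y\<in>car X. opr X x (opr X x y) = opr X y (opr X y x))"

definition is_subuniverse :: "'a alg \<Rightarrow> 'a set \<Rightarrow> bool" where
  "is_subuniverse X S \<longleftrightarrow> S \<subseteq> car X \<and> zer X \<in> S \<and>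
     (\<forall>x\<in>S. \<forall>y\<in>S. opr X x y \<in> S)"

definition subalg :: "'a alg \<Rightarrow> 'a set \<Rightarrow> 'a alg" where
  "subalg X S = \<lparr>car = S, opr = opr X, zer = zer X\<rparr>"

definition iso :: "'a alg \<Rightarrow> 'b alg \<Rightarrow> bool" where
  "iso X Y \<longleftrightarrow> (\<exists>f. bij_betw f (car X) (car Y) \<and> f (zer X) = zer Y \<and>
     (\<forall>x\<in>car X. \<forall>y\<in>car X. f (opr X x y) = opr Y (f x) (f y)))"

definition iso_to_sub :: "'a alg \<Rightarrow> 'b alg \<Rightarrow> bool" where
  "iso_to_sub X A \<longleftrightarrow> (\<exists>S. is_subuniverse A S \<and> iso X (subalg A S))"

definition is_cong :: "'a alg \<Rightarrow> ('a \<times> 'a) set \<Rightarrow> bool" where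
  "is_cong X \<theta> \<longleftrightarrow> equiv (car X) \<theta> \<and>
     (\<forall>x x' y y'. (x, x') \<in> \<theta> \<and> (y, y') \<in> \<theta> \<longrightarrow> (opr X x y, opr X x' y') \<in> \<theta>)"

text \<open>Subdirectly irreducible: there is a least congruence above the identity
  (a monolith), i.e. a pair of distinct elements collapsed by every nontrivial congruence.\<close>
definition subdirectly_irreducible :: "'a alg \<Rightarrow> bool" where
  "subdirectly_irreducible X \<longleftrightarrow>
     (\<exists>p\<in>car X. \<exists>q\<in>car X. p \<noteq> q \<and>
        (\<forall>\<theta>. is_cong X \<theta> \<and> \<theta> \<noteq> Id_on (car X) \<longrightarrow> (p, q) \<in> \<theta>))"

datatype trm = Var nat | Zero | Minus trm trm

primrec eval :: "'a alg \<Rightarrow> (nat \<Rightarrow> 'a) \<Rightarrow> trm \<Rightarrow> 'a" where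
  "eval X v (Var n) = v n"
| "eval X v Zero = zer X"
| "eval X v (Minus s t) = opr X (eval X v s) (eval X v t)"

text \<open>The equational theory of an algebra; the variety V(X) is the class of models
  of this set, so V(X) \<subseteq> V(Y) iff Ids Y \<subseteq> Ids X, and the equational theory of
  V(X) \<or> V(Y) is Ids X \<inter> Ids Y.\<close>
definition Ids :: "'a alg \<Rightarrow> (trm \<times> trm) set" where
  "Ids X = {(s, t). \<forall>v. (\<forall>n. v n \<in> car X) \<longrightarrow> eval X v s = eval X v t}"

definition down :: "'a set \<Rightarrow> ('a \<Rightarrow> 'a \<Rightarrow> bool) \<Rightarrow> 'a \<Rightarrow> 'a set" where
  "down S le x = {z \<in> S. le z x}"

definition hgt :: "'a set \<Rightarrow> ('a \<Rightarrow> 'a \<Rightarrow> bool) \<Rightarrow> 'a \<Rightarrow> nat" where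
  "hgt S le x = card (down S le x) - 1"

definition tmeet :: "'a set \<Rightarrow> ('a \<Rightarrow> 'a \<Rightarrow> bool) \<Rightarrow> 'a \<Rightarrow> 'a \<Rightarrow> 'a" where
  "tmeet S le x y = (THE m. m \<in> S \<and> le m x \<and> le m y \<and> (\<forall>w\<in>S. le w x \<and> le w y \<longrightarrow> le w m))"

definition tree_op :: "'a set \<Rightarrow> ('a \<Rightarrow> 'a \<Rightarrow> bool) \<Rightarrow> 'a \<Rightarrow> 'a \<Rightarrow> 'a" where
  "tree_op S le x y = (THE z. z \<in> S \<and> le z x \<and>
      hgt S le z = hgt S le x - hgt S le (tmeet S le x y))"

text \<open>Order on B \<union> {c}, with B embedded via Some and the new element c = None
  a maximal element covering a.\<close>
fun ext_le :: "'a alg \<Rightarrow> 'a \<Rightarrow> 'a option \<Rightarrow> 'a option \<Rightarrow> bool" where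
  "ext_le A a (Some u) (Some v) = (opr A u v = zer A)"
| "ext_le A a (Some u) None = (opr A u a = zer A)"
| "ext_le A a None (Some v) = False"
| "ext_le A a None None = True"

definition ext_alg :: "'a alg \<Rightarrow> 'a set \<Rightarrow> 'a \<Rightarrow> 'a option alg" where
  "ext_alg A B a =
     \<lparr>car = Some ` B \<union> {None},
      opr = tree_op (Some ` B \<union> {None}) (ext_le A a),
      zer = Some (zer A)\<rparr>"

text \<open>C belongs to Cov(A): C = C_a for some subalgebra B of A and nonzero a in B,
  i.e. C is the inclusion-least subuniverse of B_a containing c that is not
  isomorphic to a subalgebra of A.\<close>
definition in_Cov :: "'a alg \<Rightarrow> 'a option alg \<Rightarrow> bool" where
  "in_Cov A C \<longleftrightarrow> (\<exists>B a D.
     is_subuniverse A B \<and> a \<in> B \<and> a \<noteq> zer A \<and>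
     is_subuniverse (ext_alg A B a) D \<and> None \<in> D \<and>
     \<not> iso_to_sub (subalg (ext_alg A B a) D) A \<and>
     (\<forall>D'. is_subuniverse (ext_alg A B a) D' \<and> None \<in> D' \<and>
           \<not> iso_to_sub (subalg (ext_alg A B a) D') A \<longrightarrow> D \<subseteq> D') \<and>
     C = subalg (ext_alg A B a) D)"

end

theory Submission
  imports Defs
begin

locale bck =
  fixes S :: "'a set" and m :: "'a \<Rightarrow> 'a \<Rightarrow> 'a" (infixl "\<ominus>" 65) and z :: 'a
  assumes zS: "z \<in> S"
    and cl: "x \<in> S \<Longrightarrow> y \<in> S \<Longrightarrow> x \<ominus> y \<in> S"
    and ax1: "x \<in> S \<Longrightarrow> y \<in> S \<Longrightarrow> w \<in> S \<Longrightarrow> ((x \<ominus> y) \<ominus> (x \<ominus> w)) \<ominus> (w \<ominus> y) = z"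
    and ax2: "x \<in> S \<Longrightarrow> x \<ominus> z = x"
    and ax3: "x \<in> S \<Longrightarrow> z \<ominus> x = z"
    and ax4: "x \<in> S \<Longrightarrow> y \<in> S \<Longrightarrow> x \<ominus> y = z \<Longrightarrow> y \<ominus> x = z \<Longrightarrow> x = y"
    and ax5: "x \<in> S \<Longrightarrow> y \<in> S \<Longrightarrow> x \<ominus> (x \<ominus> y) = y \<ominus> (y \<ominus> x)"
begin
lemma L1: "x \<in> S \<Longrightarrow> x \<ominus> x = z"
  by (metis ax2 ax5 cl ax1)
lemma L2: "x \<in> S \<Longrightarrow> y \<in> S \<Longrightarrow> (x \<ominus> y) \<ominus> x = z"
  by (metis (full_types) ax1 ax2 ax3 cl)
lemma L3: "x \<in> S \<Longrightarrow> y \<in> S \<Longrightarrow> w \<in> S \<Longrightarrow> x \<ominus> y = z \<Longrightarrow> y \<ominus> w = z \<Longrightarrow> x \<ominus> w = z"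
  by (smt (verit) ax2 bck.ax1 bck_axioms cl)
lemma L4: "x \<in> S \<Longrightarrow> y \<in> S \<Longrightarrow> w \<in> S \<Longrightarrow> y \<ominus> w = z \<Longrightarrow> (x \<ominus> w) \<ominus> (x \<ominus> y) = z"
  by (metis ax1 ax2 cl)
lemma L6a: "x \<in> S \<Longrightarrow> y \<in> S \<Longrightarrow> (x \<ominus> (x \<ominus> y)) \<ominus> y = z"
  using ax2 bck.ax1 bck_axioms zS by force
lemma L7: "x \<in> S \<Longrightarrow> y \<in> S \<Longrightarrow> x \<ominus> (x \<ominus> (x \<ominus> y)) = x \<ominus> y"
  by (metis L2 ax2 ax5 cl)
lemma L5: "x \<in> S \<Longrightarrow> y \<in> S \<Longrightarrow> w \<in> S \<Longrightarrow> x \<ominus> y = z \<Longrightarrow> (x \<ominus> w) \<ominus> (y \<ominus> w) = z"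
  by (metis ax1 ax2 cl)
lemma glb: "x \<in> S \<Longrightarrow> y \<in> S \<Longrightarrow> w \<in> S \<Longrightarrow> w \<ominus> x = z \<Longrightarrow> w \<ominus> y = z \<Longrightarrow> w \<ominus> (x \<ominus> (x \<ominus> y)) = z"
  by (smt (verit, best) L4 ax2 ax5 cl)
lemma Lex1: "x \<in> S \<Longrightarrow> y \<in> S \<Longrightarrow> w \<in> S \<Longrightarrow> ((x \<ominus> y) \<ominus> w) \<ominus> ((x \<ominus> w) \<ominus> y) = z"
proof -
  assume S: "x \<in> S" "y \<in> S" "w \<in> S"
  have 1: "((x \<ominus> y) \<ominus> w) \<ominus> ((x \<ominus> y) \<ominus> (x \<ominus> (x \<ominus> w))) = z"
    using L4[of "x \<ominus> y" "x \<ominus> (x \<ominus> w)" w] L6a[of x w] S cl by auto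
  have 2: "((x \<ominus> y) \<ominus> (x \<ominus> (x \<ominus> w))) \<ominus> ((x \<ominus> w) \<ominus> y) = z"
    using ax1[of x y "x \<ominus> w"] S cl by auto
  show ?thesis using L3[OF _ _ _ 1 2] S cl by auto
qed
lemma Lex: "x \<in> S \<Longrightarrow> y \<in> S \<Longrightarrow> w \<in> S \<Longrightarrow> (x \<ominus> y) \<ominus> w = (x \<ominus> w) \<ominus> y"
  by (meson Lex1 ax4 cl)
lemma prel: "u \<in> S \<Longrightarrow> v \<in> S \<Longrightarrow> x \<in> S \<Longrightarrow> u \<ominus> x = z \<Longrightarrow> v \<ominus> x = z \<Longrightarrow> (u \<ominus> v) \<ominus> ((u \<ominus> v) \<ominus> (v \<ominus> u)) = z"
  by (smt (verit, del_insts) L2 Lex ax2 ax5 cl)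

lemma meet_le1: "x \<in> S \<Longrightarrow> y \<in> S \<Longrightarrow> (x \<ominus> (x \<ominus> y)) \<ominus> x = z"
  using L2 cl by blast
lemma meet_id: "x \<in> S \<Longrightarrow> w \<in> S \<Longrightarrow> w \<ominus> x = z \<Longrightarrow> x \<ominus> (x \<ominus> w) = w"
  using ax5 ax2 by metis
lemma le0: "x \<in> S \<Longrightarrow> x \<ominus> z = z \<Longrightarrow> x = z"
  using ax2 by metis
lemma meet_comm: "x \<in> S \<Longrightarrow> y \<in> S \<Longrightarrow> x \<ominus> (x \<ominus> y) = y \<ominus> (y \<ominus> x)"
  by (rule ax5)

definition ideal :: "'a set \<Rightarrow> bool" where
  "ideal J \<longleftrightarrow> J \<subseteq> S \<and> z \<in> J \<and> (\<forall>x\<in>S. \<forall>y\<in>J. x \<ominus> y \<in> J \<longrightarrow> x \<in> J)"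

definition congr :: "('a \<times> 'a) set \<Rightarrow> bool" where
  "congr th \<longleftrightarrow> equiv S th \<and>
     (\<forall>x x' y y'. (x, x') \<in> th \<and> (y, y') \<in> th \<longrightarrow> (x \<ominus> y, x' \<ominus> y') \<in> th)"

definition thJ :: "'a set \<Rightarrow> ('a \<times> 'a) set" where
  "thJ J = {(x, y). x \<in> S \<and> y \<in> S \<and> x \<ominus> y \<in> J \<and> y \<ominus> x \<in> J}"

lemma ideal_down: "ideal J \<Longrightarrow> x \<in> S \<Longrightarrow> y \<in> J \<Longrightarrow> x \<ominus> y = z \<Longrightarrow> x \<in> J"
  unfolding ideal_def by metis

lemma congr_thJ: assumes J: "ideal J" shows "congr (thJ J)"
proof -
  have JS: "J \<subseteq> S" and zJ: "z \<in> J" using J unfolding ideal_def by auto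
  have tr: "x \<ominus> w \<in> J" if "x \<in> S" "y \<in> S" "w \<in> S" "x \<ominus> y \<in> J" "y \<ominus> w \<in> J" for x y w
  proof -
    have "(x \<ominus> w) \<ominus> (x \<ominus> y) \<in> J"
      using ideal_down[OF J, of "(x \<ominus> w) \<ominus> (x \<ominus> y)" "y \<ominus> w"] ax1[of x w y] that cl by auto
    then show ?thesis using J that cl unfolding ideal_def by blast
  qed
  have eq: "equiv S (thJ J)"
  proof -
    have "refl_on S (thJ J)" unfolding refl_on_def thJ_def using L1 zJ by auto
    moreover have "sym (thJ J)" unfolding sym_def thJ_def by auto
    moreover have "trans (thJ J)" unfolding trans_def thJ_def
    proof (clarify)
      fix x y w assume "x \<in> S" "y \<in> S" "x \<ominus> y \<in> J" "y \<ominus> x \<in> J" "w \<in> S" "y \<ominus> w \<in> J" "w \<ominus> y \<in> J"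
      then show "x \<ominus> w \<in> J \<and> w \<ominus> x \<in> J" using tr by blast
    qed
    moreover have "thJ J \<subseteq> S \<times> S" unfolding thJ_def by auto
    ultimately show ?thesis unfolding equiv_def by blast
  qed
  have c1: "(x \<ominus> y) \<ominus> (x' \<ominus> y) \<in> J" if "x \<in> S" "x' \<in> S" "y \<in> S" "x \<ominus> x' \<in> J" for x x' y
  proof -
    have e1: "((x \<ominus> y) \<ominus> (x \<ominus> x')) \<ominus> (x' \<ominus> y) = z" using ax1[of x y x'] that by blast
    have e2: "((x \<ominus> y) \<ominus> (x \<ominus> x')) \<ominus> (x' \<ominus> y) = ((x \<ominus> y) \<ominus> (x' \<ominus> y)) \<ominus> (x \<ominus> x')"
      using Lex[of "x \<ominus> y" "x \<ominus> x'" "x' \<ominus> y"] that cl by blast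
    have "((x \<ominus> y) \<ominus> (x' \<ominus> y)) \<ominus> (x \<ominus> x') = z" using e1 unfolding e2 .
    then show ?thesis using ideal_down[OF J, of "(x \<ominus> y) \<ominus> (x' \<ominus> y)" "x \<ominus> x'"] that cl by blast
  qed
  have c2: "(x \<ominus> y) \<ominus> (x \<ominus> y') \<in> J" if "x \<in> S" "y \<in> S" "y' \<in> S" "y' \<ominus> y \<in> J" for x y y'
  proof -
    have "((x \<ominus> y) \<ominus> (x \<ominus> y')) \<ominus> (y' \<ominus> y) = z"
      using ax1[of x y y'] that cl by auto
    then show ?thesis using ideal_down[OF J, of "(x \<ominus> y) \<ominus> (x \<ominus> y')" "y' \<ominus> y"] that cl by blast
  qed
  have comp: "(x \<ominus> y, x' \<ominus> y') \<in> thJ J" if "(x, x') \<in> thJ J" "(y, y') \<in> thJ J" for x x' y y'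
  proof -
    have "(x \<ominus> y, x' \<ominus> y) \<in> thJ J" using that c1 cl unfolding thJ_def by auto
    moreover have "(x' \<ominus> y, x' \<ominus> y') \<in> thJ J" using that c2 cl unfolding thJ_def by auto
    ultimately show ?thesis using eq unfolding equiv_def trans_def by blast
  qed
  show ?thesis unfolding congr_def using eq comp by blast
qed

definition ann :: "'a set \<Rightarrow> 'a set" where
  "ann X = {w \<in> S. \<forall>j\<in>X. w \<ominus> (w \<ominus> j) = z}"

lemma ann_ideal: assumes "X \<subseteq> S" shows "ideal (ann X)"
proof -
  have clo: "x \<in> ann X" if x: "x \<in> S" and y: "y \<in> ann X" and xy: "x \<ominus> y \<in> ann X" for x y
  proof -
    have "x \<ominus> (x \<ominus> j) = z" if j: "j \<in> X" for j
    proof -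
      obtain mm where mm_def: "mm = x \<ominus> (x \<ominus> j)" by blast
      have jS: "j \<in> S" using j assms by auto
      have yS: "y \<in> S" using y unfolding ann_def by auto
      have mS: "mm \<in> S" using cl x jS mm_def by auto
      have mx: "mm \<ominus> x = z" using meet_le1 x jS mm_def by auto
      have mj: "mm \<ominus> j = z" using L6a x jS mm_def by auto
      have yj: "y \<ominus> (y \<ominus> j) = z" using y j unfolding ann_def by auto
      have mm1: "(mm \<ominus> (mm \<ominus> y)) \<ominus> (y \<ominus> (y \<ominus> j)) = z"
      proof -
        have a1: "(mm \<ominus> (mm \<ominus> y)) \<ominus> y = z" using L6a mS yS by auto
        have a2: "(mm \<ominus> (mm \<ominus> y)) \<ominus> j = z" using L3[OF _ _ _ meet_le1[OF mS yS] mj] mS yS jS cl by auto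
        show ?thesis using glb[OF yS jS _ a1 a2] mS yS cl by auto
      qed
      have mm2: "(mm \<ominus> (mm \<ominus> y)) \<ominus> z = z" using mm1 yj by simp
      have mmy: "mm \<ominus> (mm \<ominus> y) = z" using le0[OF _ mm2] mS yS cl by blast
      have "mm \<ominus> y = mm" using L7[OF mS yS] mmy ax2 mS by auto
      moreover have "(mm \<ominus> y) \<ominus> (x \<ominus> y) = z" using L5[OF mS x yS mx] .
      ultimately have m1: "mm \<ominus> (x \<ominus> y) = z" by simp
      have xyS: "x \<ominus> y \<in> S" using cl x yS by auto
      have "mm \<ominus> ((x \<ominus> y) \<ominus> ((x \<ominus> y) \<ominus> j)) = z" using glb[OF xyS jS mS m1 mj] .
      moreover have "(x \<ominus> y) \<ominus> ((x \<ominus> y) \<ominus> j) = z" using xy j unfolding ann_def by auto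
      ultimately have "mm \<ominus> z = z" by simp
      then show ?thesis using le0[of mm] mS mm_def by blast
    qed
    then show ?thesis unfolding ann_def using x by auto
  qed
  have c3: "\<forall>x\<in>S. \<forall>y\<in>ann X. x \<ominus> y \<in> ann X \<longrightarrow> x \<in> ann X"
    by (intro ballI impI, rule clo)
  have c2: "z \<in> ann X" unfolding ann_def using zS ax3 assms by auto
  have c1: "ann X \<subseteq> S" unfolding ann_def by blast
  show ?thesis unfolding ideal_def using c1 c2 c3 by (intro conjI)
qed

definition dn :: "'a \<Rightarrow> 'a set" where "dn x = {w \<in> S. w \<ominus> x = z}"

lemma iter_z: "g \<in> S \<Longrightarrow> ((\<lambda>y. y \<ominus> g) ^^ n) z = z"
  by (induction n) (auto simp: ax3)

lemma iter_S: "g \<in> S \<Longrightarrow> x \<in> S \<Longrightarrow> ((\<lambda>y. y \<ominus> g) ^^ n) x \<in> S"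
  by (induction n) (auto simp: cl)

end

locale bck_si = bck +
  assumes fin: "finite S"
    and SI: "\<exists>p\<in>S. \<exists>q\<in>S. p \<noteq> q \<and> (\<forall>th. congr th \<and> th \<noteq> Id_on S \<longrightarrow> (p, q) \<in> th)"
begin

lemma A1: assumes pS: "p \<in> S" and qS: "q \<in> S" and p0: "p \<noteq> z" and q0: "q \<noteq> z"
  shows "p \<ominus> (p \<ominus> q) \<noteq> z"
proof
  assume mpq: "p \<ominus> (p \<ominus> q) = z"
  define J1 where "J1 = ann {q}"
  define J2 where "J2 = ann J1"
  have J1S: "J1 \<subseteq> S" unfolding J1_def ann_def by blast
  have I1: "ideal J1" unfolding J1_def using ann_ideal qS by blast
  have I2: "ideal J2" unfolding J2_def using ann_ideal[OF J1S] .
  have pJ1: "p \<in> J1" unfolding J1_def ann_def using pS mpq by blast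
  have qJ2: "q \<in> J2" unfolding J2_def
  proof -
    have "q \<ominus> (q \<ominus> j) = z" if "j \<in> J1" for j
    proof -
      have "j \<in> S" "j \<ominus> (j \<ominus> q) = z" using that unfolding J1_def ann_def by auto
      then show ?thesis using ax5[OF qS \<open>j \<in> S\<close>] by simp
    qed
    then show "q \<in> ann J1" unfolding ann_def using qS by blast
  qed
  have int: "w = z" if "w \<in> J1" "w \<in> J2" for w
  proof -
    have wS: "w \<in> S" using that J1S by blast
    have "w \<ominus> (w \<ominus> w) = z" using that unfolding J2_def ann_def by blast
    then show ?thesis using L1[OF wS] ax2[OF wS] by simp
  qed
  have zJ1: "z \<in> J1" and zJ2: "z \<in> J2" using I1 I2 unfolding ideal_def by auto
  have n1: "thJ J1 \<noteq> Id_on S"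
  proof
    assume "thJ J1 = Id_on S"
    moreover have "(p, z) \<in> thJ J1" unfolding thJ_def using pS zS ax2[OF pS] ax3[OF pS] pJ1 zJ1 by auto
    ultimately show False using p0 by (auto simp: Id_on_def)
  qed
  have n2: "thJ J2 \<noteq> Id_on S"
  proof
    assume "thJ J2 = Id_on S"
    moreover have "(q, z) \<in> thJ J2" unfolding thJ_def using qS zS ax2[OF qS] ax3[OF qS] qJ2 zJ2 by auto
    ultimately show False using q0 by (auto simp: Id_on_def)
  qed
  obtain p1 q1 where p1: "p1 \<in> S" "q1 \<in> S" "p1 \<noteq> q1"
    and mono: "\<And>th. congr th \<Longrightarrow> th \<noteq> Id_on S \<Longrightarrow> (p1, q1) \<in> th"
    using SI by blast
  have "(p1, q1) \<in> thJ J1" using mono[OF congr_thJ[OF I1] n1] .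
  moreover have "(p1, q1) \<in> thJ J2" using mono[OF congr_thJ[OF I2] n2] .
  ultimately have "p1 \<ominus> q1 = z" "q1 \<ominus> p1 = z" using int unfolding thJ_def by auto
  then show False using ax4 p1 by blast
qed

lemma A2: assumes "u \<in> S" "v \<in> S" "x \<in> S" "u \<ominus> x = z" "v \<ominus> x = z"
  shows "u \<ominus> v = z \<or> v \<ominus> u = z"
proof (rule ccontr)
  assume "\<not> ?thesis"
  then have "u \<ominus> v \<noteq> z" "v \<ominus> u \<noteq> z" by auto
  from A1[OF cl[OF assms(1,2)] cl[OF assms(2,1)] this] prel[OF assms] show False by simp
qed

lemma dn_fin: "finite (dn x)" unfolding dn_def using fin by auto

lemma dn_strict: assumes xS: "x \<in> S" and gS: "g \<in> S" and x0: "x \<noteq> z" and g0: "g \<noteq> z"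
  shows "card (dn (x \<ominus> g)) < card (dn x)"
proof -
  have xg: "x \<ominus> g \<in> S" using cl xS gS by blast
  have sub: "dn (x \<ominus> g) \<subseteq> dn x" unfolding dn_def using L3[OF _ xg xS _ L2[OF xS gS]] by blast
  have "x \<notin> dn (x \<ominus> g)"
  proof
    assume "x \<in> dn (x \<ominus> g)"
    then have "x \<ominus> (x \<ominus> g) = z" unfolding dn_def by blast
    then have "x \<ominus> g = x" using ax4[OF xg xS L2[OF xS gS]] by simp
    then have "x \<ominus> (x \<ominus> g) = z" using L1[OF xS] by simp
    then show False using A1[OF xS gS x0 g0] by simp
  qed
  moreover have "x \<in> dn x" unfolding dn_def using xS L1[OF xS] by blast
  ultimately have "dn (x \<ominus> g) \<subset> dn x" using sub by blast
  then show ?thesis using psubset_card_mono dn_fin by blast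
qed

lemma HD_aux: assumes gS: "g \<in> S" and g0: "g \<noteq> z"
  shows "x \<in> S \<Longrightarrow> card (dn x) \<le> n \<Longrightarrow> ((\<lambda>y. y \<ominus> g) ^^ n) x = z"
proof (induction n arbitrary: x)
  case 0
  have "x \<in> dn x" unfolding dn_def using 0 L1 by blast
  then show ?case using 0 dn_fin[of x] by (simp add: card_gt_0_iff)
next
  case (Suc n)
  show ?case
  proof (cases "x = z")
    case True
    then show ?thesis using iter_z[OF gS, of "Suc n"] by simp
  next
    case False
    have "card (dn (x \<ominus> g)) \<le> n" using dn_strict[OF Suc.prems(1) gS False g0] Suc.prems(2) by simp
    then have "((\<lambda>y. y \<ominus> g) ^^ n) (x \<ominus> g) = z" using Suc.IH cl Suc.prems(1) gS by blast
    then show ?thesis by (simp add: funpow_Suc_right del: funpow.simps)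
  qed
qed

lemma HD: assumes gS: "g \<in> S" and g0: "g \<noteq> z" and xS: "x \<in> S" and n: "card S \<le> n"
  shows "((\<lambda>y. y \<ominus> g) ^^ n) x = z"
proof -
  have "card (dn x) \<le> card S" unfolding dn_def using fin by (intro card_mono) auto
  then show ?thesis using HD_aux[OF gS g0 xS] n by simp
qed

end

lemma bck_of: "is_cBCK X \<Longrightarrow> bck (car X) (opr X) (zer X)"
  unfolding is_cBCK_def bck_def by blast


lemma bck_si_of: assumes "is_cBCK X" "finite (car X)" "subdirectly_irreducible X"
  shows "bck_si (car X) (opr X) (zer X)"
proof -
  interpret bck "car X" "opr X" "zer X" using bck_of[OF assms(1)] .
  have "is_cong X th = congr th" for th unfolding is_cong_def congr_def by simp
  then show ?thesis using assms unfolding bck_si_def bck_si_axioms_def subdirectly_irreducible_def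
    using bck_of[OF assms(1)] by simp
qed


locale tree =
  fixes T :: "'b set" and le :: "'b \<Rightarrow> 'b \<Rightarrow> bool"
  assumes tfin: "finite T"
    and trefl: "x \<in> T \<Longrightarrow> le x x"
    and tantisym: "x \<in> T \<Longrightarrow> y \<in> T \<Longrightarrow> le x y \<Longrightarrow> le y x \<Longrightarrow> x = y"
    and ttrans: "x \<in> T \<Longrightarrow> y \<in> T \<Longrightarrow> w \<in> T \<Longrightarrow> le x y \<Longrightarrow> le y w \<Longrightarrow> le x w"
    and tchain: "x \<in> T \<Longrightarrow> y1 \<in> T \<Longrightarrow> y2 \<in> T \<Longrightarrow> le y1 x \<Longrightarrow> le y2 x \<Longrightarrow> le y1 y2 \<or> le y2 y1"
begin

abbreviation "dw \<equiv> down T le"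
abbreviation "ht \<equiv> hgt T le"

lemma dw_fin: "finite (dw x)" unfolding down_def using tfin by auto

lemma G0: "x \<in> T \<Longrightarrow> x \<in> dw x" unfolding down_def using trefl by auto

lemma G0c: "x \<in> T \<Longrightarrow> card (dw x) = ht x + 1"
proof -
  assume "x \<in> T"
  then have "card (dw x) > 0" using G0 dw_fin card_gt_0_iff by blast
  then show ?thesis unfolding hgt_def by simp
qed

lemma G1: assumes "x \<in> T" "y \<in> T" "le y x" shows "dw y \<subseteq> dw x"
  using assms ttrans unfolding down_def by blast

lemma G1h: assumes "x \<in> T" "y \<in> T" "le y x" shows "ht y \<le> ht x"
  using card_mono[OF dw_fin G1[OF assms]] unfolding hgt_def by simp

lemma G1s: assumes "x \<in> T" "y \<in> T" "le y x" "y \<noteq> x" shows "ht y < ht x"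
proof -
  have "x \<notin> dw y" using assms tantisym unfolding down_def by blast
  then have "dw y \<subset> dw x" using G1[OF assms(1-3)] G0[OF assms(1)] by blast
  then have "card (dw y) < card (dw x)" using psubset_card_mono dw_fin by blast
  then show ?thesis using G0c assms by simp
qed

lemma G2: "x \<in> T \<Longrightarrow> inj_on ht (dw x)"
proof (rule inj_onI)
  fix y1 y2 assume x: "x \<in> T" and y1: "y1 \<in> dw x" and y2: "y2 \<in> dw x" and h: "ht y1 = ht y2"
  have y1T: "y1 \<in> T" "le y1 x" and y2T: "y2 \<in> T" "le y2 x" using y1 y2 unfolding down_def by auto
  show "y1 = y2"
  proof (rule ccontr)
    assume ne: "y1 \<noteq> y2"
    from tchain[OF x y1T(1) y2T(1) y1T(2) y2T(2)] show False
    proof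
      assume "le y1 y2" then show False using G1s[OF y2T(1) y1T(1) _ ne] h by simp
    next
      assume "le y2 y1" then show False using G1s[OF y1T(1) y2T(1) _ ] ne h by auto
    qed
  qed
qed

lemma G3: assumes x: "x \<in> T" and k: "k \<le> ht x" shows "\<exists>y\<in>T. le y x \<and> ht y = k"
proof -
  have sub: "ht ` dw x \<subseteq> {0..ht x}"
  proof
    fix h assume "h \<in> ht ` dw x"
    then obtain y where "y \<in> dw x" "h = ht y" by blast
    then show "h \<in> {0..ht x}" using G1h[OF x] unfolding down_def by auto
  qed
  have "card (ht ` dw x) = card (dw x)" using card_image[OF G2[OF x]] .
  also have "\<dots> = card {0..ht x}" using G0c[OF x] by simp
  finally have "ht ` dw x = {0..ht x}" using card_subset_eq[OF _ sub] by simp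
  then have "k \<in> ht ` dw x" using k by simp
  then show ?thesis unfolding down_def by auto
qed

lemma G_uniq: assumes x: "x \<in> T" and "y1 \<in> T" "le y1 x" "y2 \<in> T" "le y2 x" "ht y1 = ht y2"
  shows "y1 = y2"
  using G2[OF x] assms unfolding down_def inj_on_def by auto

lemma G4: assumes x: "x \<in> T"
  shows "tree_op T le x y \<in> T \<and> le (tree_op T le x y) x \<and>
    ht (tree_op T le x y) = ht x - ht (tmeet T le x y)"
proof -
  obtain y' where y': "y' \<in> T" "le y' x" "ht y' = ht x - ht (tmeet T le x y)"
    using G3[OF x, of "ht x - ht (tmeet T le x y)"] by auto
  have "tree_op T le x y = y'" unfolding tree_op_def
    by (rule the_equality) (use y' G_uniq[OF x] in auto)
  then show ?thesis using y' by simp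
qed

lemma G4u: assumes x: "x \<in> T" and "y' \<in> T" "le y' x" "ht y' = ht x - ht (tmeet T le x y)"
  shows "tree_op T le x y = y'"
  using G4[OF x, of y] G_uniq[OF x] assms by metis

lemma G5: assumes "m \<in> T" "le m x" "le m y" "\<forall>w\<in>T. le w x \<and> le w y \<longrightarrow> le w m"
  shows "tmeet T le x y = m"
  unfolding tmeet_def
  by (rule the_equality) (use assms tantisym in blast)+

end

locale extA = bck_si "car A" "opr A" "zer A" for A :: "'a alg" +
  fixes B :: "'a set" and a :: 'a
  assumes Bsub: "is_subuniverse A B" and aB: "a \<in> B" and a0: "a \<noteq> zer A"
begin

abbreviation sb (infixl "\<ominus>" 65) where "sb x y \<equiv> opr A x y"
abbreviation "TT \<equiv> Some ` B \<union> {None}"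
abbreviation "LE \<equiv> ext_le A a"

lemma BS: "B \<subseteq> car A" and zB: "zer A \<in> B" and Bcl: "x \<in> B \<Longrightarrow> y \<in> B \<Longrightarrow> x \<ominus> y \<in> B"
  using Bsub unfolding is_subuniverse_def by auto

lemma aS: "a \<in> car A" using aB BS by auto

lemma BS': "u \<in> B \<Longrightarrow> u \<in> car A" using BS by auto

lemma TT_cases: "x \<in> TT \<Longrightarrow> (x = None \<Longrightarrow> P) \<Longrightarrow> (\<And>u. x = Some u \<Longrightarrow> u \<in> B \<Longrightarrow> P) \<Longrightarrow> P"
  by auto

lemma LE_None_iff: "LE None y \<longleftrightarrow> y = None" by (cases y) auto

lemma tree_TT: "tree TT LE"
proof
  show "finite TT" using fin BS finite_subset by auto
next
  fix x assume "x \<in> TT" then show "LE x x" using L1 BS' by (cases x) auto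
next
  fix x y assume x: "x \<in> TT" and y: "y \<in> TT" and "LE x y" "LE y x"
  then show "x = y"
    by (cases x; cases y) (auto intro: ax4 BS')
next
  fix x y w assume x: "x \<in> TT" and y: "y \<in> TT" and w: "w \<in> TT" and xy: "LE x y" and yw: "LE y w"
  show "LE x w"
  proof (cases x)
    case None then show ?thesis using xy yw by (simp add: LE_None_iff)
  next
    case (Some u)
    then have uS: "u \<in> car A" using x BS by auto
    show ?thesis
    proof (cases y)
      case None then show ?thesis using yw Some xy by (simp add: LE_None_iff)
    next
      case (Some v)
      then have vS: "v \<in> car A" using y BS by auto
      have uv: "u \<ominus> v = zer A" using xy Some \<open>x = Some u\<close> by simp
      show ?thesis
      proof (cases w)
        case None
        have "v \<ominus> a = zer A" using yw None Some by simp
        then have "u \<ominus> a = zer A" using L3[OF uS vS aS uv] by simp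
        then show ?thesis using None \<open>x = Some u\<close> by simp
      next
        case (Some ww)
        then have wS: "ww \<in> car A" using w BS by auto
        have "v \<ominus> ww = zer A" using yw Some \<open>y = Some v\<close> by simp
        then have "u \<ominus> ww = zer A" using L3[OF uS vS wS uv] by simp
        then show ?thesis using Some \<open>x = Some u\<close> by simp
      qed
    qed
  qed
next
  fix x y1 y2 assume x: "x \<in> TT" and y1: "y1 \<in> TT" and y2: "y2 \<in> TT" and l1: "LE y1 x" and l2: "LE y2 x"
  show "LE y1 y2 \<or> LE y2 y1"
  proof (cases x)
    case None
    show ?thesis
    proof (cases y1)
      case None then show ?thesis using y2 l2 \<open>x = None\<close> by (cases y2) auto
    next
      case (Some u1)
      show ?thesis
      proof (cases y2)
        case None then show ?thesis using Some l1 \<open>x = None\<close> by auto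
      next
        case (Some u2)
        then show ?thesis using \<open>y1 = Some u1\<close> \<open>x = None\<close> l1 l2 y1 y2 A2[OF BS' BS' aS, of u1 u2] by auto
      qed
    qed
  next
    case (Some u)
    then have uB: "u \<in> B" using x by auto
    obtain u1 where u1: "y1 = Some u1" using l1 Some by (cases y1) auto
    obtain u2 where u2: "y2 = Some u2" using l2 Some by (cases y2) auto
    show ?thesis using u1 u2 Some l1 l2 y1 y2 uB A2[OF BS' BS' BS', of u1 u2 u] by auto
  qed
qed

end

sublocale extA \<subseteq> tr: tree TT LE by (rule tree_TT)

context extA begin

definition cB :: "'a \<Rightarrow> nat" where "cB u = card {v \<in> B. v \<ominus> u = zer A}"

lemma dw_Some: "tr.dw (Some u) = Some ` {v \<in> B. v \<ominus> u = zer A}"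
  unfolding down_def by (auto elim: ext_le.elims)

lemma ht_Some: "tr.ht (Some u) = cB u - 1"
  unfolding hgt_def dw_Some cB_def by (simp add: card_image)

lemma Bfin: "finite B" using fin BS finite_subset by auto

lemma inv_count: assumes xB: "x \<in> B" and wB: "w \<in> B" and wx: "w \<ominus> x = zer A"
  shows "cB (x \<ominus> w) + cB w = cB x + 1"
proof -
  have xS: "x \<in> car A" and wS: "w \<in> car A" using xB wB BS by auto
  define U where "U = {v \<in> B. w \<ominus> v = zer A \<and> v \<ominus> x = zer A}"
  define Lw where "Lw = {v \<in> B. v \<ominus> w = zer A \<and> v \<noteq> w}"
  have split: "{v \<in> B. v \<ominus> x = zer A} = U \<union> Lw"
  proof
    show "{v \<in> B. v \<ominus> x = zer A} \<subseteq> U \<union> Lw"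
    proof
      fix v assume v: "v \<in> {v \<in> B. v \<ominus> x = zer A}"
      then have vB: "v \<in> B" and vx: "v \<ominus> x = zer A" by auto
      from A2[OF BS'[OF vB] wS xS vx wx] show "v \<in> U \<union> Lw"
      proof
        assume "v \<ominus> w = zer A"
        then show ?thesis using vB vx L1[OF wS] unfolding U_def Lw_def by (cases "v = w") auto
      next
        assume "w \<ominus> v = zer A" then show ?thesis using vB vx unfolding U_def by auto
      qed
    qed
  next
    show "U \<union> Lw \<subseteq> {v \<in> B. v \<ominus> x = zer A}"
      unfolding U_def Lw_def using L3[OF _ wS xS _ wx] BS' by auto
  qed
  have disj: "U \<inter> Lw = {}" unfolding U_def Lw_def using ax4 BS' wS by blast
  have finU: "finite U" and finL: "finite Lw" unfolding U_def Lw_def using Bfin by auto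
  have cx: "cB x = card U + card Lw" unfolding cB_def split using card_Un_disjoint[OF finU finL disj] .
  have "{v \<in> B. v \<ominus> w = zer A} = insert w Lw" unfolding Lw_def using wB L1[OF wS] by auto
  then have cw: "cB w = card Lw + 1" unfolding cB_def using finL Lw_def by simp
  have img: "{v \<in> B. v \<ominus> (x \<ominus> w) = zer A} = (\<lambda>v. x \<ominus> v) ` U"
  proof
    show "{v \<in> B. v \<ominus> (x \<ominus> w) = zer A} \<subseteq> (\<lambda>v. x \<ominus> v) ` U"
    proof
      fix v assume "v \<in> {v \<in> B. v \<ominus> (x \<ominus> w) = zer A}"
      then have vB: "v \<in> B" and v1: "v \<ominus> (x \<ominus> w) = zer A" by auto
      have vS: "v \<in> car A" using vB BS by auto
      have xwS: "x \<ominus> w \<in> car A" using cl xS wS by auto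
      have vx: "v \<ominus> x = zer A" using L3[OF vS xwS xS v1 L2[OF xS wS]] .
      have e: "x \<ominus> (x \<ominus> v) = v" using meet_id[OF xS vS vx] .
      have "(x \<ominus> (x \<ominus> w)) \<ominus> (x \<ominus> v) = zer A" using L4[OF xS vS xwS v1] .
      moreover have "x \<ominus> (x \<ominus> w) = w" using meet_id[OF xS wS wx] .
      ultimately have "w \<ominus> (x \<ominus> v) = zer A" by simp
      moreover have "(x \<ominus> v) \<ominus> x = zer A" using L2[OF xS vS] .
      moreover have "x \<ominus> v \<in> B" using Bcl xB vB by auto
      ultimately have "x \<ominus> v \<in> U" unfolding U_def by auto
      then show "v \<in> (\<lambda>v. x \<ominus> v) ` U" using e by force
    qed
  next
    show "(\<lambda>v. x \<ominus> v) ` U \<subseteq> {v \<in> B. v \<ominus> (x \<ominus> w) = zer A}"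
    proof
      fix y assume "y \<in> (\<lambda>v. x \<ominus> v) ` U"
      then obtain v where vU: "v \<in> U" and y: "y = x \<ominus> v" by blast
      have vB: "v \<in> B" and wv: "w \<ominus> v = zer A" using vU unfolding U_def by auto
      have "(x \<ominus> v) \<ominus> (x \<ominus> w) = zer A" using L4[OF xS wS BS'[OF vB] wv] .
      then show "y \<in> {v \<in> B. v \<ominus> (x \<ominus> w) = zer A}" using y Bcl xB vB by auto
    qed
  qed
  have inj: "inj_on (\<lambda>v. x \<ominus> v) U"
  proof (rule inj_onI)
    fix v1 v2 assume "v1 \<in> U" "v2 \<in> U" and eq: "x \<ominus> v1 = x \<ominus> v2"
    then have "v1 \<in> car A" "v2 \<in> car A" "v1 \<ominus> x = zer A" "v2 \<ominus> x = zer A" unfolding U_def using BS by auto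
    then show "v1 = v2" using meet_id[OF xS] eq by metis
  qed
  have "cB (x \<ominus> w) = card U" unfolding cB_def img using card_image[OF inj] .
  then show ?thesis using cx cw by simp
qed

lemma cB_pos: "u \<in> B \<Longrightarrow> cB u \<ge> 1"
proof -
  assume uB: "u \<in> B"
  then have "u \<in> {v \<in> B. v \<ominus> u = zer A}" using L1 BS' by auto
  then show ?thesis unfolding cB_def using Bfin card_gt_0_iff by (metis (no_types, lifting) One_nat_def Suc_leI empty_iff finite_subset mem_Collect_eq subsetI)
qed

end

context extA begin

abbreviation "mt \<equiv> tmeet TT LE"
abbreviation "op \<equiv> tree_op TT LE"
abbreviation "zo \<equiv> Some (zer A)"

lemma zoT: "zo \<in> TT" using zB by auto

lemma LE_zo: "x \<in> TT \<Longrightarrow> LE zo x"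
  using ax3 BS aS by (cases x) auto

lemma LE_to_zo: assumes "w \<in> TT" "LE w zo" shows "w = zo"
proof (cases w)
  case None then show ?thesis using assms by simp
next
  case (Some v)
  then have "v \<in> car A" "v \<ominus> zer A = zer A" using assms BS by auto
  then show ?thesis using le0 Some by blast
qed

lemma ht_zo: "tr.ht zo = 0"
proof -
  have "{v \<in> B. v \<ominus> zer A = zer A} = {zer A}" using le0 BS' zB ax3 zS by auto
  then show ?thesis unfolding ht_Some cB_def by simp
qed

lemma ht0: assumes w: "w \<in> TT" and h: "tr.ht w = 0" shows "w = zo"
proof -
  have "card (tr.dw w) = 1" using tr.G0c[OF w] h by simp
  moreover have "w \<in> tr.dw w" using tr.G0[OF w] .
  moreover have "zo \<in> tr.dw w" unfolding down_def using zoT LE_zo[OF w] by blast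
  ultimately show ?thesis by (metis card_1_singletonE singletonD)
qed

lemma tm_SS: assumes "u \<in> B" "v \<in> B" shows "mt (Some u) (Some v) = Some (u \<ominus> (u \<ominus> v))"
proof (rule tr.G5)
  have uS: "u \<in> car A" and vS: "v \<in> car A" using assms BS by auto
  show "Some (u \<ominus> (u \<ominus> v)) \<in> TT" using Bcl assms by auto
  show "LE (Some (u \<ominus> (u \<ominus> v))) (Some u)" using meet_le1[OF uS vS] by simp
  show "LE (Some (u \<ominus> (u \<ominus> v))) (Some v)" using L6a[OF uS vS] by simp
  show "\<forall>w\<in>TT. LE w (Some u) \<and> LE w (Some v) \<longrightarrow> LE w (Some (u \<ominus> (u \<ominus> v)))"
  proof (intro ballI impI)
    fix w assume w: "w \<in> TT" and l: "LE w (Some u) \<and> LE w (Some v)"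
    then obtain ww where ww: "w = Some ww" "ww \<in> B" by (cases w) auto
    then show "LE w (Some (u \<ominus> (u \<ominus> v)))" using glb[OF uS vS BS'[OF ww(2)]] l by simp
  qed
qed

lemma tm_NS: assumes "v \<in> B" shows "mt None (Some v) = Some (a \<ominus> (a \<ominus> v))"
proof (rule tr.G5)
  have vS: "v \<in> car A" using assms BS by auto
  show "Some (a \<ominus> (a \<ominus> v)) \<in> TT" using Bcl assms aB by auto
  show "LE (Some (a \<ominus> (a \<ominus> v))) None" using meet_le1[OF aS vS] by simp
  show "LE (Some (a \<ominus> (a \<ominus> v))) (Some v)" using L6a[OF aS vS] by simp
  show "\<forall>w\<in>TT. LE w None \<and> LE w (Some v) \<longrightarrow> LE w (Some (a \<ominus> (a \<ominus> v)))"
  proof (intro ballI impI)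
    fix w assume w: "w \<in> TT" and l: "LE w None \<and> LE w (Some v)"
    then obtain ww where ww: "w = Some ww" "ww \<in> B" by (cases w) auto
    then show "LE w (Some (a \<ominus> (a \<ominus> v)))" using glb[OF aS vS BS'[OF ww(2)]] l by simp
  qed
qed

lemma tm_SN: assumes "u \<in> B" shows "mt (Some u) None = Some (u \<ominus> (u \<ominus> a))"
proof (rule tr.G5)
  have uS: "u \<in> car A" using assms BS by auto
  show "Some (u \<ominus> (u \<ominus> a)) \<in> TT" using Bcl assms aB by auto
  show "LE (Some (u \<ominus> (u \<ominus> a))) (Some u)" using meet_le1[OF uS aS] by simp
  show "LE (Some (u \<ominus> (u \<ominus> a))) None" using L6a[OF uS aS] by simp
  show "\<forall>w\<in>TT. LE w (Some u) \<and> LE w None \<longrightarrow> LE w (Some (u \<ominus> (u \<ominus> a)))"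
  proof (intro ballI impI)
    fix w assume w: "w \<in> TT" and l: "LE w (Some u) \<and> LE w None"
    then obtain ww where ww: "w = Some ww" "ww \<in> B" by (cases w) auto
    then show "LE w (Some (u \<ominus> (u \<ominus> a)))" using glb[OF uS aS BS'[OF ww(2)]] l by simp
  qed
qed

lemma tm_NN: "mt None None = None"
  by (rule tr.G5) (auto simp: LE_None_iff)

lemma tm_props: assumes x: "x \<in> TT" and y: "y \<in> TT"
  shows "mt x y \<in> TT \<and> LE (mt x y) x \<and> LE (mt x y) y \<and> (x \<noteq> zo \<longrightarrow> y \<noteq> zo \<longrightarrow> mt x y \<noteq> zo)"
proof (cases x)
  case None
  show ?thesis
  proof (cases y)
    case None then show ?thesis using \<open>x = None\<close> tm_NN by simp
  next
    case (Some v)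
    then have vB: "v \<in> B" using y by auto
    have "v \<noteq> zer A \<longrightarrow> a \<ominus> (a \<ominus> v) \<noteq> zer A" using A1[OF aS BS'[OF vB] a0] by blast
    then show ?thesis using None Some tm_NS[OF vB] meet_le1[OF aS BS'[OF vB]] L6a[OF aS BS'[OF vB]] Bcl[OF aB Bcl[OF aB vB]] by simp
  qed
next
  case (Some u)
  then have uB: "u \<in> B" using x by auto
  show ?thesis
  proof (cases y)
    case None
    have "u \<noteq> zer A \<longrightarrow> u \<ominus> (u \<ominus> a) \<noteq> zer A" using A1[OF BS'[OF uB] aS _ a0] by blast
    then show ?thesis using None Some tm_SN[OF uB] meet_le1[OF BS'[OF uB] aS] L6a[OF BS'[OF uB] aS] Bcl[OF uB Bcl[OF uB aB]] by simp
  next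
    case (Some v)
    then have vB: "v \<in> B" using y by auto
    have "u \<noteq> zer A \<longrightarrow> v \<noteq> zer A \<longrightarrow> u \<ominus> (u \<ominus> v) \<noteq> zer A" using A1[OF BS'[OF uB] BS'[OF vB]] by blast
    then show ?thesis using \<open>x = Some u\<close> Some tm_SS[OF uB vB] meet_le1[OF BS'[OF uB] BS'[OF vB]] L6a[OF BS'[OF uB] BS'[OF vB]] Bcl[OF uB Bcl[OF uB vB]] by simp
  qed
qed

lemma E1: assumes uB: "u \<in> B" and vB: "v \<in> B" shows "op (Some u) (Some v) = Some (u \<ominus> v)"
proof (rule tr.G4u)
  have uS: "u \<in> car A" and vS: "v \<in> car A" using assms BS by auto
  show "Some u \<in> TT" using uB by auto
  show "Some (u \<ominus> v) \<in> TT" using Bcl uB vB by auto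
  show "LE (Some (u \<ominus> v)) (Some u)" using L2[OF uS vS] by simp
  define mm where "mm = u \<ominus> (u \<ominus> v)"
  have mB: "mm \<in> B" using Bcl uB vB mm_def by auto
  have e: "u \<ominus> mm = u \<ominus> v" using L7[OF uS vS] mm_def by simp
  have mu: "mm \<ominus> u = zer A" using meet_le1[OF uS vS] mm_def by simp
  have c: "cB (u \<ominus> mm) + cB mm = cB u + 1" using inv_count[OF uB mB mu] .
  have p: "cB mm \<ge> 1" using cB_pos[OF mB] .
  show "tr.ht (Some (u \<ominus> v)) = tr.ht (Some u) - tr.ht (mt (Some u) (Some v))"
    unfolding tm_SS[OF uB vB] mm_def[symmetric] ht_Some using c p e by simp
qed

lemma C0: assumes x: "x \<in> TT" shows "op x x = zo"
proof -
  have m: "mt x x = x" by (rule tr.G5) (use x tr.trefl in auto)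
  show ?thesis by (rule tr.G4u[OF x zoT LE_zo[OF x]]) (unfold m ht_zo, simp)
qed

lemma C1: "op zo y = zo"
  using tr.G4[OF zoT, of y] LE_to_zo by blast

lemma Cz: assumes x: "x \<in> TT" shows "op x zo = x"
proof -
  have m: "mt x zo = zo" by (rule tr.G5) (use x zoT LE_zo tr.trefl L1[OF zS] in auto)
  show ?thesis by (rule tr.G4u[OF x x tr.trefl[OF x]]) (unfold m ht_zo, simp)
qed

lemma C3a: assumes x: "x \<in> TT" and y: "y \<in> TT" and e: "op x y = zo" shows "LE x y"
proof -
  have h: "tr.ht x - tr.ht (mt x y) = 0" using tr.G4[OF x, of y] e ht_zo by simp
  have mp: "mt x y \<in> TT" "LE (mt x y) x" "LE (mt x y) y" using tm_props[OF x y] by auto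
  have "mt x y = x"
  proof (rule ccontr)
    assume "mt x y \<noteq> x"
    then have "tr.ht (mt x y) < tr.ht x" using tr.G1s[OF x mp(1) mp(2)] by simp
    then show False using h by simp
  qed
  then show ?thesis using mp by simp
qed

lemma C3: assumes "x \<in> TT" "y \<in> TT" "op x y = zo" "op y x = zo" shows "x = y"
  using C3a[OF assms(1,2,3)] C3a[OF assms(2,1,4)] tr.tantisym assms by blast

lemma opT: assumes x: "x \<in> TT" shows "op x y \<in> TT"
  using tr.G4[OF x, of y] by (elim conjE)

lemma C2: assumes x: "x \<in> TT" and g: "g \<in> TT" and x0: "x \<noteq> zo" and g0: "g \<noteq> zo"
  shows "tr.ht (op x g) < tr.ht x"
proof -
  have "mt x g \<noteq> zo" "mt x g \<in> TT" using tm_props[OF x g] x0 g0 by auto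
  then have "tr.ht (mt x g) \<noteq> 0" using ht0 by blast
  moreover have "tr.ht x \<noteq> 0" using ht0[OF x] x0 by blast
  ultimately show ?thesis using tr.G4[OF x, of g] by simp
qed

lemma iter_zo: "((\<lambda>y. op y g) ^^ n) zo = zo"
proof (induction n)
  case 0 then show ?case by simp
next
  case (Suc n) then show ?case using C1 by (simp only: funpow.simps comp_apply)
qed

lemma HDT_aux: assumes g: "g \<in> TT" and g0: "g \<noteq> zo"
  shows "x \<in> TT \<Longrightarrow> tr.ht x \<le> n \<Longrightarrow> ((\<lambda>y. op y g) ^^ n) x = zo"
proof (induction n arbitrary: x)
  case 0
  then show ?case using ht0 by simp
next
  case (Suc n)
  show ?case
  proof (cases "x = zo")
    case True
    then show ?thesis using iter_zo[of "Suc n" g] by simp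
  next
    case False
    have "tr.ht (op x g) \<le> n" using C2[OF Suc.prems(1) g False g0] Suc.prems(2) by simp
    then have "((\<lambda>y. op y g) ^^ n) (op x g) = zo" using Suc.IH opT Suc.prems(1) by blast
    then show ?thesis by (simp add: funpow_Suc_right del: funpow.simps)
  qed
qed

lemma HDT: assumes g: "g \<in> TT" and g0: "g \<noteq> zo" and x: "x \<in> TT" and n: "card TT \<le> n"
  shows "((\<lambda>y. op y g) ^^ n) x = zo"
proof -
  have "card (tr.dw x) \<le> card TT" unfolding down_def using tr.tfin by (intro card_mono) auto
  then have "tr.ht x \<le> n" using tr.G0c[OF x] n by simp
  then show ?thesis using HDT_aux[OF g g0 x] by simp
qed

end

section \<open>Terms\<close>

primrec vars :: "trm \<Rightarrow> nat set" where
  "vars (Var n) = {n}"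
| "vars Zero = {}"
| "vars (Minus s t) = vars s \<union> vars t"

primrec tsub :: "(nat \<Rightarrow> trm) \<Rightarrow> trm \<Rightarrow> trm" where
  "tsub sg (Var n) = sg n"
| "tsub sg Zero = Zero"
| "tsub sg (Minus s t) = Minus (tsub sg s) (tsub sg t)"

lemma eval_cong: "(\<forall>i\<in>vars r. v i = v' i) \<Longrightarrow> eval X v r = eval X v' r"
  by (induction r) auto

lemma eval_tsub: "eval X v (tsub sg r) = eval X (\<lambda>i. eval X v (sg i)) r"
  by (induction r) auto

lemma vars_tsub: "(\<forall>i. vars (sg i) \<subseteq> V) \<Longrightarrow> vars (tsub sg r) \<subseteq> V"
  by (induction r) auto

lemma eval_subalg: "eval (subalg X S) v r = eval X v r"
  by (induction r) (auto simp: subalg_def)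

definition closed :: "'c alg \<Rightarrow> bool" where
  "closed X \<longleftrightarrow> zer X \<in> car X \<and> (\<forall>x\<in>car X. \<forall>y\<in>car X. opr X x y \<in> car X)"

lemma eval_in: "closed X \<Longrightarrow> (\<forall>i. v i \<in> car X) \<Longrightarrow> eval X v r \<in> car X"
  by (induction r) (auto simp: closed_def)

lemma closed_cBCK: "is_cBCK X \<Longrightarrow> closed X"
  unfolding is_cBCK_def closed_def by blast

lemma Ids_iso_sub: assumes cY: "closed Y" and iso: "iso_to_sub Y A" shows "Ids A \<subseteq> Ids Y"
proof
  fix p assume pA: "p \<in> Ids A"
  obtain s t where p: "p = (s, t)" by (cases p)
  obtain S f where S: "is_subuniverse A S" and bij: "bij_betw f (car Y) (car (subalg A S))"
    and f0: "f (zer Y) = zer (subalg A S)"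
    and fh: "\<forall>x\<in>car Y. \<forall>y\<in>car Y. f (opr Y x y) = opr (subalg A S) (f x) (f y)"
    using iso unfolding iso_to_sub_def iso_def by blast
  have SA: "S \<subseteq> car A" using S unfolding is_subuniverse_def by auto
  have fS: "f x \<in> S" if "x \<in> car Y" for x using bij that unfolding bij_betw_def subalg_def by auto
  have hom: "f (eval Y v r) = eval A (f \<circ> v) r" if v: "\<forall>i. v i \<in> car Y" for v r
  proof (induction r)
    case (Var n) then show ?case by simp
  next
    case Zero then show ?case using f0 by (simp add: subalg_def)
  next
    case (Minus r1 r2)
    have "eval Y v r1 \<in> car Y" "eval Y v r2 \<in> car Y" using eval_in[OF cY v] by auto
    then show ?case using fh Minus by (simp add: subalg_def)
  qed
  show "p \<in> Ids Y" unfolding Ids_def p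
  proof (clarify)
    fix v :: "nat \<Rightarrow> _" assume v: "\<forall>n. v n \<in> car Y"
    have "\<forall>n. (f \<circ> v) n \<in> car A" using v fS SA by auto
    then have "eval A (f \<circ> v) s = eval A (f \<circ> v) t" using pA p unfolding Ids_def by auto
    then have "f (eval Y v s) = f (eval Y v t)" using hom[OF v] by simp
    moreover have "eval Y v s \<in> car Y" "eval Y v t \<in> car Y" using eval_in[OF cY v] by auto
    ultimately show "eval Y v s = eval Y v t" using bij unfolding bij_betw_def inj_on_def by blast
  qed
qed

definition kl :: "trm \<Rightarrow> trm list \<Rightarrow> trm" where
  "kl d gs = foldl (\<lambda>r g. Minus r g) d gs"

lemma kl_append: "kl d (xs @ ys) = kl (kl d xs) ys" unfolding kl_def by simp

lemma kl_Cons: "kl d (g # gs) = kl (Minus d g) gs" unfolding kl_def by simp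

lemma vars_kl: "vars (kl d gs) = vars d \<union> \<Union> (vars ` set gs)"
  unfolding kl_def by (induction gs arbitrary: d) auto

lemma eval_kl_zero: assumes cX: "closed X" and w: "\<forall>i. w i \<in> car X"
  and x0: "\<forall>x\<in>car X. opr X x (zer X) = x" and gs: "\<forall>g\<in>set gs. eval X w g = zer X"
  shows "eval X w (kl d gs) = eval X w d"
  using gs
proof (induction gs arbitrary: d)
  case Nil then show ?case unfolding kl_def by simp
next
  case (Cons g gs)
  have "eval X w (kl d (g # gs)) = eval X w (kl (Minus d g) gs)" by (simp add: kl_Cons)
  also have "\<dots> = eval X w (Minus d g)" using Cons by simp
  also have "\<dots> = eval X w d" using Cons.prems x0 eval_in[OF cX w] by simp
  finally show ?case .
qed

lemma eval_kl_z: assumes cX: "closed X" and w: "\<forall>i. w i \<in> car X"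
  and z0: "\<forall>x\<in>car X. opr X (zer X) x = zer X" and d: "eval X w d = zer X"
  shows "eval X w (kl d gs) = zer X"
  using d
proof (induction gs arbitrary: d)
  case Nil then show ?case unfolding kl_def by simp
next
  case (Cons g gs)
  have "eval X w (Minus d g) = zer X" using Cons.prems z0 eval_in[OF cX w] by simp
  then show ?case using Cons.IH by (simp add: kl_Cons)
qed

lemma eval_kl_rep: "eval X w (kl d (replicate N g)) = ((\<lambda>y. opr X y (eval X w g)) ^^ N) (eval X w d)"
proof (induction N arbitrary: d)
  case 0 then show ?case unfolding kl_def by simp
next
  case (Suc N)
  have "eval X w (kl d (replicate (Suc N) g)) = eval X w (kl (Minus d g) (replicate N g))" by (simp add: kl_Cons)
  also have "\<dots> = ((\<lambda>y. opr X y (eval X w g)) ^^ N) (opr X (eval X w d) (eval X w g))" using Suc by simp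
  also have "\<dots> = ((\<lambda>y. opr X y (eval X w g)) ^^ Suc N) (eval X w d)" by (simp add: funpow_Suc_right del: funpow.simps)
  finally show ?case .
qed

lemma kill: assumes fW: "finite W" and cX: "closed X" and W: "\<forall>w\<in>W. \<forall>i. w i \<in> car X"
  and z0: "\<forall>x\<in>car X. opr X (zer X) x = zer X"
  and HD: "\<forall>g\<in>car X. g \<noteq> zer X \<longrightarrow> (\<forall>x\<in>car X. ((\<lambda>y. opr X y g) ^^ N) x = zer X)"
  and ex: "\<forall>w\<in>W. \<exists>g\<in>I. eval X w g \<noteq> zer X"
  shows "\<exists>gs. set gs \<subseteq> I \<and> (\<forall>w\<in>W. \<forall>d. eval X w (kl d gs) = zer X)"
  using fW W ex
proof (induction W rule: finite_induct)
  case empty then show ?case by (intro exI[of _ "[]"]) auto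
next
  case (insert w W)
  obtain gs where gs: "set gs \<subseteq> I" "\<forall>w\<in>W. \<forall>d. eval X w (kl d gs) = zer X" using insert by auto
  obtain g where g: "g \<in> I" "eval X w g \<noteq> zer X" using insert.prems by auto
  have wc: "\<forall>i. w i \<in> car X" using insert.prems by auto
  define gs' where "gs' = replicate N g @ gs"
  have "\<forall>w'\<in>insert w W. \<forall>d. eval X w' (kl d gs') = zer X"
  proof (intro ballI allI)
    fix w' d assume w': "w' \<in> insert w W"
    show "eval X w' (kl d gs') = zer X"
    proof (cases "w' = w")
      case True
      have "eval X w (kl d (replicate N g)) = zer X"
        unfolding eval_kl_rep using HD eval_in[OF cX wc] g by blast
      then show ?thesis unfolding gs'_def kl_append True by (rule eval_kl_z[OF cX wc z0])
    next
      case False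
      then have "w' \<in> W" using w' by auto
      then show ?thesis unfolding gs'_def kl_append using gs(2) by blast
    qed
  qed
  moreover have "set gs' \<subseteq> I" unfolding gs'_def using gs g by auto
  ultimately show ?case by blast
qed

definition nv :: "'c alg \<Rightarrow> nat \<Rightarrow> (nat \<Rightarrow> 'c) set" where
  "nv X n = {w. (\<forall>i. w i \<in> car X) \<and> (\<forall>i. n \<le> i \<longrightarrow> w i = zer X)}"

lemma nv_fin: assumes fc: "finite (car X)" shows "finite (nv X n)"
proof (induction n)
  case 0
  have "nv X 0 \<subseteq> {\<lambda>_. zer X}" unfolding nv_def by auto
  then show ?case using finite_subset by blast
next
  case (Suc n)
  have "nv X (Suc n) \<subseteq> (\<lambda>(w, x). w(n := x)) ` (nv X n \<times> car X)"
  proof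
    fix w assume w: "w \<in> nv X (Suc n)"
    have e1: "w (Suc n) \<in> car X" using w unfolding nv_def by blast
    have e2: "w (Suc n) = zer X" using w unfolding nv_def by blast
    have zc: "zer X \<in> car X" using e1 e2 by simp
    have "w(n := zer X) \<in> nv X n" using w zc unfolding nv_def by auto
    moreover have "w n \<in> car X" using w unfolding nv_def by auto
    moreover have "w = (w(n := zer X))(n := w n)" by simp
    ultimately have "(w(n := zer X), w n) \<in> nv X n \<times> car X" "w = (\<lambda>(w, x). w(n := x)) (w(n := zer X), w n)" by auto
    then show "w \<in> (\<lambda>(w, x). w(n := x)) ` (nv X n \<times> car X)" by (rule rev_image_eqI)
  qed
  moreover have "finite ((\<lambda>(w, x). w(n := x)) ` (nv X n \<times> car X))" using Suc fc by auto
  ultimately show ?case using finite_subset by blast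
qed

lemma Ids_from_nv: assumes cX: "closed X" and vr: "vars r \<subseteq> {..<n}" and vr': "vars r' \<subseteq> {..<n}"
  and all: "\<forall>w\<in>nv X n. eval X w r = eval X w r'"
  shows "(r, r') \<in> Ids X"
  unfolding Ids_def
proof (clarify)
  fix v :: "nat \<Rightarrow> _" assume v: "\<forall>n. v n \<in> car X"
  define w where "w = (\<lambda>i. if i < n then v i else zer X)"
  have "w \<in> nv X n" unfolding w_def nv_def using v cX unfolding closed_def by auto
  then have "eval X w r = eval X w r'" using all by blast
  moreover have "eval X w r = eval X v r" by (rule eval_cong) (use vr w_def in auto)
  moreover have "eval X w r' = eval X v r'" by (rule eval_cong) (use vr' w_def in auto)
  ultimately show "eval X v r = eval X v r'" by simp
qed

lemma vars_fin: "finite (vars r)" by (induction r) auto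

locale mainctx = extA A B a for A :: "'a alg" and B a +
  fixes D :: "'a option set"
  assumes Dsub: "is_subuniverse (ext_alg A B a) D" and ND: "None \<in> D"
    and notiso: "\<not> iso_to_sub (subalg (ext_alg A B a) D) A"
    and minD: "\<forall>D'. is_subuniverse (ext_alg A B a) D' \<and> None \<in> D' \<and>
       \<not> iso_to_sub (subalg (ext_alg A B a) D') A \<longrightarrow> D \<subseteq> D'"
begin

abbreviation "EE \<equiv> ext_alg A B a"
abbreviation "CC \<equiv> subalg EE D"

lemma EE_simps: "car EE = TT" "opr EE = op" "zer EE = zo" unfolding ext_alg_def by auto
lemma CC_simps: "car CC = D" "opr CC = op" "zer CC = zo" unfolding subalg_def ext_alg_def by auto

lemma DT: "D \<subseteq> TT" and zoD: "zo \<in> D" and Dcl: "x \<in> D \<Longrightarrow> y \<in> D \<Longrightarrow> op x y \<in> D"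
  using Dsub unfolding is_subuniverse_def EE_simps by auto

lemma DT': "x \<in> D \<Longrightarrow> x \<in> TT" using DT by auto

lemma closedCC: "closed CC" unfolding closed_def CC_simps using zoD Dcl by auto

lemma finD: "finite D" using DT tr.tfin finite_subset by auto

lemma evalCC_in: "\<forall>i. w i \<in> D \<Longrightarrow> eval CC w r \<in> D"
  using eval_in[OF closedCC, of w r] CC_simps by auto

lemma HDC: "\<forall>g\<in>car CC. g \<noteq> zer CC \<longrightarrow> (\<forall>x\<in>car CC. ((\<lambda>y. opr CC y g) ^^ card TT) x = zer CC)"
  unfolding CC_simps
proof (intro ballI impI)
  fix g x assume g: "g \<in> D" "g \<noteq> zo" and x: "x \<in> D"
  show "((\<lambda>y. op y g) ^^ card TT) x = zo" using HDT[OF DT'[OF g(1)] g(2) DT'[OF x] le_refl] .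
qed

lemma z0C: "\<forall>x\<in>car CC. opr CC (zer CC) x = zer CC" unfolding CC_simps using C1 by (intro ballI)
lemma x0C: "\<forall>x\<in>car CC. opr CC x (zer CC) = x" unfolding CC_simps
  by (intro ballI, rule Cz, rule DT')

lemma simple: assumes cg: "is_cong CC ps"
  shows "(\<forall>x y. (x, y) \<in> ps \<longrightarrow> x = y) \<or> (\<forall>x\<in>D. (x, zo) \<in> ps)"
proof (cases "\<forall>x y. (x, y) \<in> ps \<longrightarrow> x = y")
  case True then show ?thesis by blast
next
  case False
  then obtain x y where xy: "(x, y) \<in> ps" "x \<noteq> y" by blast
  have eq: "equiv D ps" and comp: "\<And>x x' y y'. (x, x') \<in> ps \<Longrightarrow> (y, y') \<in> ps \<Longrightarrow> (op x y, op x' y') \<in> ps"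
    using cg unfolding is_cong_def CC_simps by auto
  have psD: "ps \<subseteq> D \<times> D" and rf: "\<And>x. x \<in> D \<Longrightarrow> (x, x) \<in> ps" and sy: "\<And>x y. (x, y) \<in> ps \<Longrightarrow> (y, x) \<in> ps"
    using eq unfolding equiv_def refl_on_def sym_def by blast+
  have xD: "x \<in> D" and yD: "y \<in> D" using xy psD by auto
  have 1: "(op x y, zo) \<in> ps" using comp[OF xy(1) rf[OF yD]] C0[OF DT'[OF yD]] by simp
  have 2: "(op y x, zo) \<in> ps" using comp[OF sy[OF xy(1)] rf[OF xD]] C0[OF DT'[OF xD]] by simp
  obtain g where g: "g \<in> D" "g \<noteq> zo" "(g, zo) \<in> ps"
    using 1 2 C3[OF DT'[OF xD] DT'[OF yD]] xy(2) Dcl[OF xD yD] Dcl[OF yD xD] by metis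
  have "\<forall>x\<in>D. (x, zo) \<in> ps"
  proof
    fix x' assume x': "x' \<in> D"
    have it: "(((\<lambda>y. op y g) ^^ k) x', x') \<in> ps" for k
    proof (induction k)
      case 0 then show ?case using rf[OF x'] by simp
    next
      case (Suc k)
      have "(op (((\<lambda>y. op y g) ^^ k) x') g, op x' zo) \<in> ps" using comp[OF Suc g(3)] .
      then show ?case using Cz[OF DT'[OF x']] by simp
    qed
    have "((\<lambda>y. op y g) ^^ card TT) x' = zo" using HDT[OF DT'[OF g(1)] g(2) DT'[OF x']] by simp
    then show "(x', zo) \<in> ps" using it[of "card TT"] sy by simp
  qed
  then show ?thesis by blast
qed

end

context mainctx begin

lemma cA: "closed A" unfolding closed_def using zS cl by auto

lemma z0A: "\<forall>x\<in>car A. opr A (zer A) x = zer A" using ax3 by blast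

lemma HDA: "\<forall>g\<in>car A. g \<noteq> zer A \<longrightarrow> (\<forall>x\<in>car A. ((\<lambda>y. opr A y g) ^^ card (car A)) x = zer A)"
proof (intro ballI impI)
  fix g x assume "g \<in> car A" "g \<noteq> zer A" "x \<in> car A"
  then show "((\<lambda>y. opr A y g) ^^ card (car A)) x = zer A" using HD[of g x "card (car A)"] by simp
qed

lemma part1: "\<not> Ids A \<subseteq> Ids CC"
proof
  assume sub: "Ids A \<subseteq> Ids CC"
  define n where "n = card D"
  obtain f where f: "bij_betw f {0..<n} D" using ex_bij_betw_nat_finite[OF finD] n_def by blast
  define u where "u = (\<lambda>i. if i < n then f i else zo)"
  have fD: "i < n \<Longrightarrow> f i \<in> D" for i using f bij_betwE by fastforce
  have uD: "\<forall>i. u i \<in> D" unfolding u_def using fD zoD by auto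
  have uC: "\<forall>i. u i \<in> car CC" using uD CC_simps by simp
  have surj: "\<exists>i<n. u i = x" if "x \<in> D" for x
  proof -
    have "x \<in> f ` {0..<n}" using f that unfolding bij_betw_def by auto
    then obtain i where "i < n" "f i = x" by auto
    then show ?thesis unfolding u_def by auto
  qed
  obtain i0 where i0: "i0 < n" "u i0 = None" using surj[OF ND] by blast
  define I where "I = {g. vars g \<subseteq> {..<n} \<and> eval CC u g = zo}"
  have wC: "\<forall>i. w i \<in> car A" if "w \<in> nv A n" for w using that unfolding nv_def by blast
  have exw: "\<exists>w\<in>nv A n. eval A w (Var i0) \<noteq> zer A \<and> (\<forall>g\<in>I. eval A w g = zer A)"
  proof (rule ccontr)
    assume nex: "\<not> ?thesis"
    define W where "W = {w \<in> nv A n. eval A w (Var i0) \<noteq> zer A}"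
    have fW: "finite W" unfolding W_def using nv_fin[OF fin, of n] by auto
    have Wc: "\<forall>w\<in>W. \<forall>i. w i \<in> car A" unfolding W_def using wC by blast
    have ex: "\<forall>w\<in>W. \<exists>g\<in>I. eval A w g \<noteq> zer A" using nex unfolding W_def by blast
    obtain gs where gs: "set gs \<subseteq> I" "\<forall>w\<in>W. \<forall>d. eval A w (kl d gs) = zer A"
      using kill[OF fW cA Wc z0A HDA ex] by blast
    define e where "e = kl (Var i0) gs"
    have ve: "vars e \<subseteq> {..<n}" unfolding e_def vars_kl using i0 gs(1) unfolding I_def by auto
    have "\<forall>w\<in>nv A n. eval A w e = eval A w Zero"
    proof
      fix w assume w: "w \<in> nv A n"
      show "eval A w e = eval A w Zero"
      proof (cases "w \<in> W")
        case True then show ?thesis using gs(2) e_def by simp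
      next
        case False
        then have "eval A w (Var i0) = zer A" using w unfolding W_def by blast
        then show ?thesis unfolding e_def using eval_kl_z[OF cA wC[OF w] z0A] by simp
      qed
    qed
    then have "(e, Zero) \<in> Ids A" using Ids_from_nv[OF cA ve] by simp
    then have "(e, Zero) \<in> Ids CC" using sub by blast
    then have "eval CC u e = zo" using uC unfolding Ids_def CC_simps by (simp add: subalg_def ext_alg_def)
    moreover have "eval CC u e = eval CC u (Var i0)" unfolding e_def
      by (rule eval_kl_zero[OF closedCC uC x0C]) (use gs(1) I_def CC_simps in auto)
    ultimately show False using i0 by simp
  qed
  then obtain w where w: "w \<in> nv A n" "eval A w (Var i0) \<noteq> zer A" "\<forall>g\<in>I. eval A w g = zer A" by blast
  have wc: "\<forall>i. w i \<in> car A" using wC[OF w(1)] .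
  have evC: "eval CC u (Minus r r') = op (eval CC u r) (eval CC u r')" for r r' by (simp add: CC_simps)
  have wd: "eval A w r = eval A w r'" if "vars r \<subseteq> {..<n}" "vars r' \<subseteq> {..<n}" "eval CC u r = eval CC u r'" for r r'
  proof -
    have x: "eval CC u r \<in> D" using evalCC_in[OF uD] .
    have "Minus r r' \<in> I" "Minus r' r \<in> I" unfolding I_def using that C0[OF DT'[OF x]] evC by auto
    then have "opr A (eval A w r) (eval A w r') = zer A" "opr A (eval A w r') (eval A w r) = zer A" using w(3) by auto
    then show ?thesis using ax4 eval_in[OF cA wc] by blast
  qed
  define h where "h x = eval A w (SOME r. vars r \<subseteq> {..<n} \<and> eval CC u r = x)" for x
  have hr: "h (eval CC u r) = eval A w r" if vr: "vars r \<subseteq> {..<n}" for r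
  proof -
    have "\<exists>r'. vars r' \<subseteq> {..<n} \<and> eval CC u r' = eval CC u r" using vr by blast
    then have "vars (SOME r'. vars r' \<subseteq> {..<n} \<and> eval CC u r' = eval CC u r) \<subseteq> {..<n} \<and>
        eval CC u (SOME r'. vars r' \<subseteq> {..<n} \<and> eval CC u r' = eval CC u r) = eval CC u r" by (rule someI_ex)
    then show ?thesis unfolding h_def using wd vr by blast
  qed
  have repr: "\<exists>i<n. x = eval CC u (Var i)" if "x \<in> D" for x using surj[OF that] by auto
  have hz: "h zo = zer A" using hr[of Zero] by (simp add: CC_simps)
  have hN: "h None \<noteq> zer A" using hr[of "Var i0"] i0 w(2) by simp
  have hA: "h x \<in> car A" if xD: "x \<in> D" for x
  proof -
    obtain i where "i < n" "x = eval CC u (Var i)" using repr[OF xD] by blast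
    then show ?thesis using hr[of "Var i"] wc by simp
  qed
  have hom: "h (op x y) = opr A (h x) (h y)" if xyD: "x \<in> D" "y \<in> D" for x y
  proof -
    obtain i where i: "i < n" "x = eval CC u (Var i)" using repr[OF xyD(1)] by blast
    obtain j where j: "j < n" "y = eval CC u (Var j)" using repr[OF xyD(2)] by blast
    have "op x y = eval CC u (Minus (Var i) (Var j))" by (simp only: i(2) j(2) eval.simps CC_simps)
    then show ?thesis using hr[of "Minus (Var i) (Var j)"] hr[of "Var i"] hr[of "Var j"] i j by simp
  qed
  define ps where "ps = {(x, y). x \<in> D \<and> y \<in> D \<and> h x = h y}"
  have "is_cong CC ps" unfolding is_cong_def CC_simps
  proof (intro conjI allI impI)
    show "equiv D ps" unfolding equiv_def refl_on_def sym_def trans_def ps_def by auto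
  next
    fix x x' y y' assume "(x, x') \<in> ps \<and> (y, y') \<in> ps"
    then show "(op x y, op x' y') \<in> ps" unfolding ps_def using hom Dcl by auto
  qed
  from simple[OF this] have inj: "inj_on h D"
  proof
    assume "\<forall>x y. (x, y) \<in> ps \<longrightarrow> x = y"
    then show "inj_on h D" unfolding inj_on_def ps_def by blast
  next
    assume "\<forall>x\<in>D. (x, zo) \<in> ps"
    then have "h None = h zo" using ND unfolding ps_def by blast
    then show "inj_on h D" using hN hz by simp
  qed
  have su: "is_subuniverse A (h ` D)" unfolding is_subuniverse_def
  proof (intro conjI ballI)
    show "h ` D \<subseteq> car A" using hA by blast
    show "zer A \<in> h ` D" using hz zoD by force
  next
    fix x y assume "x \<in> h ` D" "y \<in> h ` D"
    then obtain x0 y0 where "x0 \<in> D" "y0 \<in> D" "x = h x0" "y = h y0" by blast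
    then show "opr A x y \<in> h ` D" using hom Dcl by force
  qed
  have "iso CC (subalg A (h ` D))" unfolding iso_def
  proof (intro exI[of _ h] conjI)
    show "bij_betw h (car CC) (car (subalg A (h ` D)))" using inj unfolding CC_simps subalg_def bij_betw_def by simp
    show "h (zer CC) = zer (subalg A (h ` D))" using hz unfolding CC_simps by (simp add: subalg_def)
    show "\<forall>x\<in>car CC. \<forall>y\<in>car CC. h (opr CC x y) = opr (subalg A (h ` D)) (h x) (h y)"
      using hom unfolding CC_simps by (simp add: subalg_def)
  qed
  then have "iso_to_sub CC A" unfolding iso_to_sub_def using su by blast
  then show False using notiso by simp
qed

end

context mainctx begin

lemma evalEE_B: assumes wB: "\<forall>i. w i \<in> Some ` B"
  shows "eval EE w r = Some (eval A (the \<circ> w) r) \<and> eval A (the \<circ> w) r \<in> B"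
proof (induction r)
  case (Var n)
  have "w n \<in> Some ` B" using wB by blast
  then show ?case by auto
next
  case Zero then show ?case using zB by (simp add: EE_simps)
next
  case (Minus r1 r2)
  then show ?case using E1 Bcl by (simp add: EE_simps)
qed

lemma part2: fixes K :: "'b alg"
  assumes cK: "is_cBCK K" and sub: "Ids A \<inter> Ids CC \<subseteq> Ids K"
    and stA: "(s, t) \<in> Ids A" and stK: "(s, t) \<notin> Ids K"
  shows "Ids K \<subseteq> Ids CC"
proof -
  interpret K: bck "car K" "opr K" "zer K" using bck_of[OF cK] .
  have cK': "closed K" using closed_cBCK[OF cK] .
  obtain v where v: "\<forall>i. v i \<in> car K" "eval K v s \<noteq> eval K v t" using stK unfolding Ids_def by auto
  obtain n where n: "vars s \<union> vars t \<subseteq> {..<n}"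
  proof -
    have "finite (vars s \<union> vars t)" using vars_fin by auto
    then obtain m where "\<forall>x\<in>vars s \<union> vars t. x < m" using finite_nat_set_iff_bounded by blast
    then show ?thesis using that by blast
  qed
  define I where "I = {g. vars g \<subseteq> {..<n} \<and> eval K v g = zer K}"
  have x0K: "\<forall>x\<in>car K. opr K x (zer K) = x" using K.ax2 by blast
  have wCA: "\<forall>i. w i \<in> car A" if "w \<in> nv A n" for w using that unfolding nv_def by blast
  have wCC: "\<forall>i. w i \<in> car CC" if "w \<in> nv CC n" for w using that unfolding nv_def by blast
  have claim: "\<exists>w\<in>nv CC n. eval CC w d \<noteq> zo \<and> (\<forall>g\<in>I. eval CC w g = zo)"
    if dd: "d = Minus s t \<or> d = Minus t s" and dK: "eval K v d \<noteq> zer K" for d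
  proof (rule ccontr)
    assume nex: "\<not> ?thesis"
    define W where "W = {w \<in> nv CC n. eval CC w d \<noteq> zer CC}"
    have fW: "finite W" unfolding W_def using nv_fin[of CC n] finD CC_simps by auto
    have Wc: "\<forall>w\<in>W. \<forall>i. w i \<in> car CC" unfolding W_def using wCC by blast
    have ex: "\<forall>w\<in>W. \<exists>g\<in>I. eval CC w g \<noteq> zer CC" using nex unfolding W_def CC_simps by blast
    obtain gs where gs: "set gs \<subseteq> I" "\<forall>w\<in>W. \<forall>d. eval CC w (kl d gs) = zer CC"
      using kill[OF fW closedCC Wc z0C HDC ex] by blast
    define e where "e = kl d gs"
    have vd: "vars d \<subseteq> {..<n}" using dd n by auto
    have ve: "vars e \<subseteq> {..<n}" unfolding e_def vars_kl using vd gs(1) unfolding I_def by auto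
    have "\<forall>w\<in>nv A n. eval A w e = eval A w Zero"
    proof
      fix w assume w: "w \<in> nv A n"
      have "eval A w s = eval A w t" using stA wCA[OF w] unfolding Ids_def by auto
      then have "eval A w d = zer A" using dd L1 eval_in[OF cA wCA[OF w]] by auto
      then show "eval A w e = eval A w Zero" unfolding e_def using eval_kl_z[OF cA wCA[OF w] z0A] by simp
    qed
    then have eA: "(e, Zero) \<in> Ids A" using Ids_from_nv[OF cA ve] by simp
    have "\<forall>w\<in>nv CC n. eval CC w e = eval CC w Zero"
    proof
      fix w assume w: "w \<in> nv CC n"
      show "eval CC w e = eval CC w Zero"
      proof (cases "w \<in> W")
        case True then show ?thesis using gs(2) e_def by simp
      next
        case False
        then have "eval CC w d = zer CC" using w unfolding W_def by blast
        then show ?thesis unfolding e_def using eval_kl_z[OF closedCC wCC[OF w] z0C] by simp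
      qed
    qed
    then have eC: "(e, Zero) \<in> Ids CC" using Ids_from_nv[OF closedCC ve] by simp
    have "(e, Zero) \<in> Ids K" using eA eC sub by blast
    then have "eval K v e = zer K" using v(1) unfolding Ids_def by auto
    moreover have "eval K v e = eval K v d" unfolding e_def
      by (rule eval_kl_zero[OF cK' v(1) x0K]) (use gs(1) I_def in auto)
    ultimately show False using dK by simp
  qed
  have "eval K v (Minus s t) \<noteq> zer K \<or> eval K v (Minus t s) \<noteq> zer K"
    using K.ax4 eval_in[OF cK' v(1)] v(2) by auto
  then obtain d where dd: "d = Minus s t \<or> d = Minus t s" and dK: "eval K v d \<noteq> zer K" by blast
  obtain w where w: "w \<in> nv CC n" "eval CC w d \<noteq> zo" "\<forall>g\<in>I. eval CC w g = zo" using claim[OF dd dK] by blast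
  have wD: "\<forall>i. w i \<in> D" using wCC[OF w(1)] CC_simps by simp
  have evD: "eval CC w r \<in> D" for r using evalCC_in[OF wD] .
  have st_ne: "eval CC w s \<noteq> eval CC w t"
  proof
    assume "eval CC w s = eval CC w t"
    then have "eval CC w d = zo" using dd C0[OF DT'[OF evD]] by (auto simp: CC_simps)
    then show False using w(2) by simp
  qed
  define E where "E = {x. \<exists>r. vars r \<subseteq> {..<n} \<and> x = eval CC w r}"
  have ED: "E \<subseteq> D" unfolding E_def using evD by blast
  have wE: "\<forall>i. w i \<in> E"
  proof
    fix i show "w i \<in> E"
    proof (cases "i < n")
      case True then show ?thesis unfolding E_def by (intro CollectI exI[of _ "Var i"]) auto
    next
      case False
      then have "w i = zo" using w(1) unfolding nv_def CC_simps by auto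
      then show ?thesis unfolding E_def by (intro CollectI exI[of _ Zero]) (auto simp: CC_simps)
    qed
  qed
  have Esub: "is_subuniverse EE E" unfolding is_subuniverse_def EE_simps
  proof (intro conjI ballI)
    show "E \<subseteq> TT" using ED DT by blast
    show "zo \<in> E" unfolding E_def by (intro CollectI exI[of _ Zero]) (auto simp: CC_simps)
  next
    fix x y assume "x \<in> E" "y \<in> E"
    then obtain r1 r2 where "vars r1 \<subseteq> {..<n}" "x = eval CC w r1" "vars r2 \<subseteq> {..<n}" "y = eval CC w r2"
      unfolding E_def by blast
    then show "op x y \<in> E" unfolding E_def by (intro CollectI exI[of _ "Minus r1 r2"]) (auto simp: CC_simps)
  qed
  have evE: "eval CC w r = eval EE w r" for r by (simp add: eval_subalg)
  have NE: "None \<in> E"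
  proof (rule ccontr)
    assume "None \<notin> E"
    then have wB: "\<forall>i. w i \<in> Some ` B"
    proof (intro allI)
      fix i assume nE: "None \<notin> E"
      have wi: "w i \<in> E" using wE by blast
      then have "w i \<in> TT" using ED DT by blast
      moreover have "w i \<noteq> None"
      proof
        assume "w i = None" then show False using wi nE by simp
      qed
      ultimately show "w i \<in> Some ` B" by blast
    qed
    have "\<forall>i. (the \<circ> w) i \<in> car A"
    proof
      fix i
      obtain b where "b \<in> B" "w i = Some b" using wB by blast
      then show "(the \<circ> w) i \<in> car A" using BS by auto
    qed
    then have "eval A (the \<circ> w) s = eval A (the \<circ> w) t" using stA unfolding Ids_def by auto
    then have "eval EE w s = eval EE w t" using evalEE_B[OF wB, of s] evalEE_B[OF wB, of t] by simp
    then show False using st_ne evE by simp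
  qed
  have cE: "closed (subalg EE E)" using Esub unfolding closed_def is_subuniverse_def by (simp add: subalg_def)
  have niE: "\<not> iso_to_sub (subalg EE E) A"
  proof
    assume "iso_to_sub (subalg EE E) A"
    then have "(s, t) \<in> Ids (subalg EE E)" using Ids_iso_sub[OF cE] stA by blast
    moreover have "\<forall>i. w i \<in> car (subalg EE E)" using wE by (simp add: subalg_def)
    ultimately have "eval (subalg EE E) w s = eval (subalg EE E) w t" unfolding Ids_def by auto
    then show False using st_ne evE eval_subalg by metis
  qed
  have "D \<subseteq> E" using minD Esub NE niE by blast
  then have DE: "D = E" using ED by blast
  show "Ids K \<subseteq> Ids CC"
  proof
    fix pq assume pqK: "pq \<in> Ids K"
    obtain p q where pq: "pq = (p, q)" by (cases pq)
    show "pq \<in> Ids CC" unfolding pq Ids_def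
    proof (clarify)
      fix u' :: "nat \<Rightarrow> 'a option" assume u': "\<forall>i. u' i \<in> car CC"
      have "\<forall>i. \<exists>r. vars r \<subseteq> {..<n} \<and> eval CC w r = u' i"
      proof
        fix i
        have "u' i \<in> E" using u' DE CC_simps by simp
        then obtain r where "vars r \<subseteq> {..<n}" "u' i = eval CC w r" unfolding E_def by blast
        then show "\<exists>r. vars r \<subseteq> {..<n} \<and> eval CC w r = u' i" by metis
      qed
      then obtain sg where sg: "\<forall>i. vars (sg i) \<subseteq> {..<n} \<and> eval CC w (sg i) = u' i" by metis
      define P where "P = tsub sg p"
      define Q where "Q = tsub sg q"
      have vP: "vars P \<subseteq> {..<n}" "vars Q \<subseteq> {..<n}" unfolding P_def Q_def using vars_tsub sg by blast+
      have "\<forall>i. eval K v (sg i) \<in> car K" using eval_in[OF cK' v(1)] by blast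
      then have "eval K v P = eval K v Q" unfolding P_def Q_def eval_tsub using pqK pq unfolding Ids_def by auto
      then have "Minus P Q \<in> I" "Minus Q P \<in> I" unfolding I_def using vP K.L1 eval_in[OF cK' v(1)] by auto
      then have m1: "eval CC w (Minus P Q) = zo" and m2: "eval CC w (Minus Q P) = zo" using w(3) by blast+
      have e1: "op (eval CC w P) (eval CC w Q) = zo" using m1 by (simp only: eval.simps CC_simps)
      have e2: "op (eval CC w Q) (eval CC w P) = zo" using m2 by (simp only: eval.simps CC_simps)
      have "eval CC w P = eval CC w Q" using C3[OF DT'[OF evD] DT'[OF evD] e1 e2] .
      moreover have "(\<lambda>i. eval CC w (sg i)) = u'" using sg by auto
      ultimately show "eval CC u' p = eval CC u' q" unfolding P_def Q_def eval_tsub by simp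
    qed
  qed
qed

end

theorem mainTheorem10:
  fixes A :: "'a alg" and C :: "'a option alg"
  assumes "is_cBCK A" and "finite (car A)" and "\<exists>x\<in>car A. x \<noteq> zer A"
    and "subdirectly_irreducible A"
    and "in_Cov A C"
  shows "Ids A \<inter> Ids C \<subset> Ids A \<and>
         (\<forall>K :: 'b alg. is_cBCK K \<and> Ids A \<inter> Ids C \<subseteq> Ids K \<and> Ids K \<subseteq> Ids A
             \<longrightarrow> Ids K = Ids A \<or> Ids K = Ids A \<inter> Ids C)"
proof -
  obtain B a D where B: "is_subuniverse A B" "a \<in> B" "a \<noteq> zer A"
    and Dp: "is_subuniverse (ext_alg A B a) D" "None \<in> D" "\<not> iso_to_sub (subalg (ext_alg A B a) D) A"
    and minD: "\<forall>D'. is_subuniverse (ext_alg A B a) D' \<and> None \<in> D' \<and>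
           \<not> iso_to_sub (subalg (ext_alg A B a) D') A \<longrightarrow> D \<subseteq> D'"
    and C: "C = subalg (ext_alg A B a) D"
    using assms(5) unfolding in_Cov_def by blast
  have bs: "bck_si (car A) (opr A) (zer A)" using bck_si_of[OF assms(1,2,4)] .
  interpret M: mainctx A B a D
    unfolding mainctx_def mainctx_axioms_def extA_def extA_axioms_def
    using bs B Dp minD by blast
  have p1: "Ids A \<inter> Ids C \<subset> Ids A" using M.part1 C by blast
  have p2: "\<forall>K :: 'b alg. is_cBCK K \<and> Ids A \<inter> Ids C \<subseteq> Ids K \<and> Ids K \<subseteq> Ids A
             \<longrightarrow> Ids K = Ids A \<or> Ids K = Ids A \<inter> Ids C"
  proof (intro allI impI)
    fix K :: "'b alg" assume K: "is_cBCK K \<and> Ids A \<inter> Ids C \<subseteq> Ids K \<and> Ids K \<subseteq> Ids A"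
    show "Ids K = Ids A \<or> Ids K = Ids A \<inter> Ids C"
    proof (cases "Ids K = Ids A")
      case True then show ?thesis by blast
    next
      case False
      then obtain p where pA: "p \<in> Ids A" and pK: "p \<notin> Ids K" using K by blast
      obtain s t where p: "p = (s, t)" by (cases p)
      have "Ids K \<subseteq> Ids C" using M.part2[of K s t] K C pA pK p by blast
      then show ?thesis using K by blast
    qed
  qed
  show ?thesis using p1 p2 by blast
qed

end
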